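(* Let $\mathfrak m\in\mathcal O_{\mathbb Z}$ and write $\mathfrak m=\mathfrak m[1]+\cdots+\mathfrak m[s]$, where $c_1>\cdots>c_s$ are the distinct ends of segments of $\mathfrak m$ and $\mathfrak m[i]$ consists of the segments (with multiplicity) ending at $c_i$. Assume $|\mathfrak m[i]|\le2$ for all $i$. Then no non-trivial decomposition of $\mathfrak m$ is relevant to the canonical order on $\mathfrak m$. In particular, if $\mathfrak m$ is distinguished then $\mathfrak m$ is of Speh type.
   Context: Segments of integers: $[a,b]=\{a,\dots,b\}$ with integers $a\le b$; $b([a,b])=a$, $e([a,b])=b$, $\nu[a,b]=[a+1,b+1]$; $[a,b]\prec[a',b']$ if $a<a'$, $b<b'$, $b\ge a'-1$. $\mathcal O_{\mathbb Z}$: finite multi-sets of segments (functions to $\mathbb Z_{\ge0}$ with finite support; $|\mathfrak m|$ is the total multiplicity; sums and pointwise minima are taken as functions; $\nu\mathfrak n$ applies $\nu$ to each segment). An ordering $\{\Delta_1,\dots,\Delta_k\}$ is standard if $\Delta_i\not\prec\Delta_j$ for $i<j$. A decomposition of $[a,b]$ is a tuple of nonempty segments $([a_1,b_1],\dots,[a_m,b_m])$ with $b_1=b$, $a_m=a$, $b_{i+1}=a_i-1$; trivial if $m=1$. A decomposition of an ordered multi-set $\{\Delta_1,\dots,\Delta_k\}$ is a choice of decomposition $(\Delta_{i,1},\dots,\Delta_{i,k_i})$ of each $\Delta_i$ (trivial if all are trivial); index set $\mathfrak I=\{(i,j)\}$ with lexicographic order $\prec$, and $(i,j)\ll(i',j')$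 iff $i<i'$. It is relevant to the ordering if there is an involution $\tau$ of $\mathfrak I$ with: $\tau(i,j+1)\ll\tau(i,j)$; $\tau(\iota)\ne\iota$ for all $\iota$; $\Delta_\iota=\nu\Delta_{\tau(\iota)}$ whenever $\iota\prec\tau(\iota)$. $\mathfrak m$ is distinguished if every standard ordering admits a relevant decomposition; of Speh type if $\mathfrak m=\mathfrak n+\nu\mathfrak n$ for some $\mathfrak n$. Canonical order: list all of $\mathfrak m[1]$, then all of $\mathfrak m[2]$, etc. Order $\mathfrak m[1]$ by nondecreasing beginnings and set $\mathfrak m[1]'=\mathfrak m[1]$. Given $\mathfrak m[i]'$, let $\mathfrak p=\min(\mathfrak m[i+1],\nu^{-1}\mathfrak m[i]')$ and $\mathfrak m[i+1]'=\mathfrak m[i+1]-\mathfrak p$; order $\mathfrak m[i+1]$ as the segments of $\mathfrak m[i+1]'$ in nondecreasing order of beginnings followed by the segments of $\mathfrak p$ in nonincreasing order of beginnings. *)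

theory Defs
  imports Main "HOL-Library.Multiset"
begin

text \<open>A segment [a,b] is represented by the pair (a,b) of integers with a \<le> b.\<close>
type_synonym seg = "int \<times> int"

definition is_seg :: "seg \<Rightarrow> bool" where
  "is_seg s \<longleftrightarrow> fst s \<le> snd s"

definition nu :: "seg \<Rightarrow> seg" where
  "nu s = (fst s + 1, snd s + 1)"

definition nu_inv :: "seg \<Rightarrow> seg" where
  "nu_inv s = (fst s - 1, snd s - 1)"

definition seg_prec :: "seg \<Rightarrow> seg \<Rightarrow> bool" where
  "seg_prec s t \<longleftrightarrow> fst s < fst t \<and> snd s < snd t \<and> snd s \<ge> fst t - 1"

definition in_OZ :: "seg multiset \<Rightarrow> bool" where
  "in_OZ m \<longleftrightarrow> (\<forall>s\<in>#m. is_seg s)"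

text \<open>An ordering of m is a list with multiset m; standard if no earlier segment precedes a later one.\<close>
definition standard_ordering :: "seg list \<Rightarrow> bool" where
  "standard_ordering xs \<longleftrightarrow> (\<forall>i j. i < j \<and> j < length xs \<longrightarrow> \<not> seg_prec (xs ! i) (xs ! j))"

definition is_seg_decomp :: "seg \<Rightarrow> seg list \<Rightarrow> bool" where
  "is_seg_decomp s ds \<longleftrightarrow> ds \<noteq> [] \<and> (\<forall>d\<in>set ds. is_seg d) \<and>
     snd (hd ds) = snd s \<and> fst (last ds) = fst s \<and>
     (\<forall>i. Suc i < length ds \<longrightarrow> snd (ds ! Suc i) = fst (ds ! i) - 1)"

definition is_decomp :: "seg list \<Rightarrow> seg list list \<Rightarrow> bool" where
  "is_decomp xs D \<longleftrightarrow> length D = length xs \<and> (\<forall>i < length xs. is_seg_decomp (xs ! i) (D ! i))"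

definition trivial_decomp :: "seg list list \<Rightarrow> bool" where
  "trivial_decomp D \<longleftrightarrow> (\<forall>i < length D. length (D ! i) = 1)"

definition decomp_index :: "seg list list \<Rightarrow> (nat \<times> nat) set" where
  "decomp_index D = {(i, j). i < length D \<and> j < length (D ! i)}"

definition lex_less :: "nat \<times> nat \<Rightarrow> nat \<times> nat \<Rightarrow> bool" where
  "lex_less p q \<longleftrightarrow> fst p < fst q \<or> (fst p = fst q \<and> snd p < snd q)"

definition piece :: "seg list list \<Rightarrow> nat \<times> nat \<Rightarrow> seg" where
  "piece D p = D ! fst p ! snd p"

definition relevant :: "seg list list \<Rightarrow> bool" where
  "relevant D \<longleftrightarrow> (\<exists>\<tau>.
     (\<forall>p\<in>decomp_index D. \<tau> p \<in> decomp_index D \<and> \<tau> (\<tau> p) = p \<and> \<tau> p \<noteq> p) \<and>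
     (\<forall>i j. (i, Suc j) \<in> decomp_index D \<longrightarrow> fst (\<tau> (i, Suc j)) < fst (\<tau> (i, j))) \<and>
     (\<forall>p\<in>decomp_index D. lex_less p (\<tau> p) \<longrightarrow> piece D p = nu (piece D (\<tau> p))))"

definition distinguished :: "seg multiset \<Rightarrow> bool" where
  "distinguished m \<longleftrightarrow> (\<forall>xs. mset xs = m \<and> standard_ordering xs \<longrightarrow> (\<exists>D. is_decomp xs D \<and> relevant D))"

definition speh_type :: "seg multiset \<Rightarrow> bool" where
  "speh_type m \<longleftrightarrow> (\<exists>n. in_OZ n \<and> m = n + image_mset nu n)"

definition block :: "seg multiset \<Rightarrow> int \<Rightarrow> seg multiset" where
  "block m c = filter_mset (\<lambda>s. snd s = c) m"

definition asc_list :: "int \<Rightarrow> seg multiset \<Rightarrow> seg list" where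
  "asc_list c r = map (\<lambda>a. (a, c)) (sorted_list_of_multiset (image_mset fst r))"

text \<open>Canonical order: prev is m[i]', cs the remaining ends in decreasing order.\<close>
fun canon_aux :: "seg multiset \<Rightarrow> seg multiset \<Rightarrow> int list \<Rightarrow> seg list" where
  "canon_aux m prev [] = []"
| "canon_aux m prev (c # cs) =
     (let blk = block m c;
          p = blk \<inter># image_mset nu_inv prev;
          r = blk - p
      in asc_list c r @ rev (asc_list c p) @ canon_aux m r cs)"

definition ends_desc :: "seg multiset \<Rightarrow> int list" where
  "ends_desc m = rev (sorted_list_of_set (snd ` set_mset m))"

definition canonical_order :: "seg multiset \<Rightarrow> seg list" where
  "canonical_order m = canon_aux m {#} (ends_desc m)"

end

theory Submission
  imports Defs
begin


section \<open>Decompositions of a single segment\<close>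

lemma segd_ne: "is_seg_decomp s ds \<Longrightarrow> ds \<noteq> []"
  by (simp add: is_seg_decomp_def)

lemma segd_seg: "is_seg_decomp s ds \<Longrightarrow> j < length ds \<Longrightarrow> fst (ds!j) \<le> snd (ds!j)"
  by (auto simp: is_seg_decomp_def is_seg_def)

lemma segd_hd: "is_seg_decomp s ds \<Longrightarrow> snd (ds!0) = snd s"
  by (auto simp: is_seg_decomp_def hd_conv_nth)

lemma segd_last: "is_seg_decomp s ds \<Longrightarrow> fst (ds ! (length ds - 1)) = fst s"
  by (auto simp: is_seg_decomp_def last_conv_nth)

lemma segd_adj: "is_seg_decomp s ds \<Longrightarrow> Suc i < length ds \<Longrightarrow> snd (ds ! Suc i) = fst (ds ! i) - 1"
  by (auto simp: is_seg_decomp_def)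

lemma segd_lt: "is_seg_decomp s ds \<Longrightarrow> j < j' \<Longrightarrow> j' < length ds \<Longrightarrow> snd (ds!j') < fst (ds!j)"
proof (induction j' arbitrary: j)
  case 0 then show ?case by simp
next
  case (Suc k)
  have a: "snd (ds ! Suc k) = fst (ds ! k) - 1" using segd_adj[OF Suc.prems(1)] Suc.prems by simp
  show ?case
  proof (cases "j = k")
    case True then show ?thesis using a by simp
  next
    case False
    then have "snd (ds!k) < fst (ds!j)" using Suc by auto
    moreover have "fst (ds!k) \<le> snd (ds!k)" using segd_seg[OF Suc.prems(1)] Suc.prems by simp
    ultimately show ?thesis using a by simp
  qed
qed

lemma segd_le_snd: "is_seg_decomp s ds \<Longrightarrow> j < length ds \<Longrightarrow> snd (ds!j) \<le> snd s"
proof (cases j)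
  case 0 assume "is_seg_decomp s ds" then show ?thesis using segd_hd 0 by simp
next
  case (Suc k)
  assume a: "is_seg_decomp s ds" "j < length ds"
  then have "snd (ds!j) < fst (ds!0)" using segd_lt[OF a(1), of 0 j] Suc by simp
  moreover have "fst (ds!0) \<le> snd (ds!0)" using segd_seg[OF a(1), of 0] segd_ne[OF a(1)] by simp
  ultimately show ?thesis using segd_hd[OF a(1)] by simp
qed

lemma segd_snd_eq: "is_seg_decomp s ds \<Longrightarrow> j < length ds \<Longrightarrow> snd (ds!j) = snd s \<Longrightarrow> j = 0"
proof (rule ccontr)
  assume a: "is_seg_decomp s ds" "j < length ds" "snd (ds!j) = snd s" "j \<noteq> 0"
  then have "snd (ds!j) < fst (ds!0)" using segd_lt[OF a(1), of 0 j] by simp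
  moreover have "fst (ds!0) \<le> snd (ds!0)" using segd_seg[OF a(1), of 0] segd_ne[OF a(1)] by simp
  ultimately show False using segd_hd[OF a(1)] a by simp
qed

lemma segd_ge_fst: "is_seg_decomp s ds \<Longrightarrow> j < length ds \<Longrightarrow> fst s \<le> fst (ds!j)"
proof -
  assume a: "is_seg_decomp s ds" "j < length ds"
  show ?thesis
  proof (cases "j = length ds - 1")
    case True then show ?thesis using segd_last[OF a(1)] by simp
  next
    case False
    then have "snd (ds!(length ds - 1)) < fst (ds!j)" using segd_lt[OF a(1), of j "length ds - 1"] a by simp
    moreover have "fst (ds!(length ds - 1)) \<le> snd (ds!(length ds - 1))" using segd_seg[OF a(1)] a by simp
    ultimately show ?thesis using segd_last[OF a(1)] by simp
  qed
qed

lemma segd_fst_eq: "is_seg_decomp s ds \<Longrightarrow> j < length ds \<Longrightarrow> fst (ds!j) = fst s \<Longrightarrow> j = length ds - 1"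
proof (rule ccontr)
  assume a: "is_seg_decomp s ds" "j < length ds" "fst (ds!j) = fst s" "j \<noteq> length ds - 1"
  then have "snd (ds!(length ds - 1)) < fst (ds!j)" using segd_lt[OF a(1), of j "length ds - 1"] a by simp
  moreover have "fst (ds!(length ds - 1)) \<le> snd (ds!(length ds - 1))" using segd_seg[OF a(1)] a by simp
  ultimately show False using segd_last[OF a(1)] a by simp
qed

lemma segd_single: "is_seg_decomp s ds \<Longrightarrow> length ds = 1 \<Longrightarrow> ds = [s]"
proof -
  assume a: "is_seg_decomp s ds" "length ds = 1"
  then obtain d where "ds = [d]" by (cases ds) auto
  then show ?thesis using segd_hd[OF a(1)] segd_last[OF a(1)] by (cases s, cases d) auto
qed

section \<open>Relevant decompositions\<close>

locale reldec =
  fixes xs :: "seg list" and D :: "seg list list" and \<tau> :: "nat \<times> nat \<Rightarrow> nat \<times> nat"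
  assumes dec: "is_decomp xs D"
    and T1: "\<forall>p\<in>decomp_index D. \<tau> p \<in> decomp_index D \<and> \<tau> (\<tau> p) = p \<and> \<tau> p \<noteq> p"
    and T2: "\<forall>i j. (i, Suc j) \<in> decomp_index D \<longrightarrow> fst (\<tau> (i, Suc j)) < fst (\<tau> (i, j))"
    and T3: "\<forall>p\<in>decomp_index D. lex_less p (\<tau> p) \<longrightarrow> piece D p = nu (piece D (\<tau> p))"
begin

lemma lenD: "length D = length xs" using dec by (simp add: is_decomp_def)

lemma idx: "(i, j) \<in> decomp_index D \<longleftrightarrow> i < length xs \<and> j < length (D!i)"
  using lenD by (simp add: decomp_index_def)

lemma dci: "i < length xs \<Longrightarrow> is_seg_decomp (xs!i) (D!i)"
  using dec by (simp add: is_decomp_def)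

lemma tin: "p \<in> decomp_index D \<Longrightarrow> \<tau> p \<in> decomp_index D" using T1 by blast
lemma tt: "p \<in> decomp_index D \<Longrightarrow> \<tau> (\<tau> p) = p" using T1 by blast
lemma tne: "p \<in> decomp_index D \<Longrightarrow> \<tau> p \<noteq> p" using T1 by blast

lemma R3: "(i, j') \<in> decomp_index D \<Longrightarrow> j < j' \<Longrightarrow> fst (\<tau> (i, j')) < fst (\<tau> (i, j))"
proof (induction j' arbitrary: j)
  case 0 then show ?case by simp
next
  case (Suc k)
  have a: "fst (\<tau> (i, Suc k)) < fst (\<tau> (i, k))" using T2 Suc.prems by blast
  show ?case
  proof (cases "j = k")
    case True then show ?thesis using a by simp
  next
    case False
    then have "(i,k) \<in> decomp_index D" "j < k" using Suc.prems by (auto simp: idx)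
    then show ?thesis using Suc.IH a by fastforce
  qed
qed

lemma R2U: "p \<in> decomp_index D \<Longrightarrow> fst p < fst (\<tau> p) \<Longrightarrow> piece D p = nu (piece D (\<tau> p))"
  using T3 by (simp add: lex_less_def)

lemma R2L: "p \<in> decomp_index D \<Longrightarrow> fst (\<tau> p) < fst p \<Longrightarrow> piece D (\<tau> p) = nu (piece D p)"
proof -
  assume p: "p \<in> decomp_index D" and l: "fst (\<tau> p) < fst p"
  have "lex_less (\<tau> p) (\<tau> (\<tau> p))" using tt[OF p] l by (simp add: lex_less_def)
  then show ?thesis using T3 tin[OF p] tt[OF p] by simp
qed

lemma R1: "p \<in> decomp_index D \<Longrightarrow> fst (\<tau> p) \<noteq> fst p"
proof
  assume p: "p \<in> decomp_index D" and e: "fst (\<tau> p) = fst p"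
  obtain i j where pij: "p = (i,j)" by (cases p)
  obtain j' where q: "\<tau> p = (i, j')" using e pij by (cases "\<tau> p") auto
  have qi: "(i,j') \<in> decomp_index D" using tin[OF p] q by simp
  have pi: "(i,j) \<in> decomp_index D" using p pij by simp
  have jj: "j \<noteq> j'" using tne[OF p] q pij by auto
  have i: "i < length xs" using pi by (simp add: idx)
  note sd = dci[OF i]
  have key: "False" if A: "(i,a) \<in> decomp_index D" "(i,b) \<in> decomp_index D" "a < b"
      "\<tau> (i,a) = (i,b)" "\<tau> (i,b) = (i,a)" for a b
  proof -
    have "piece D (i,a) = nu (piece D (i,b))" using R2U[OF A(1)] A(4) T3 A(1)
      by (simp add: lex_less_def A(3))
    then have e1: "snd (D!i!a) = snd (D!i!b) + 1" "fst (D!i!a) = fst (D!i!b) + 1"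
      by (auto simp: piece_def nu_def)
    have lb: "b < length (D!i)" using A(2) by (simp add: idx)
    have "snd (D!i!b) < fst (D!i!a)" using segd_lt[OF sd A(3) lb] .
    have ab: "b = Suc a"
    proof (rule ccontr)
      assume "b \<noteq> Suc a"
      then have "Suc a < b" using A(3) by simp
      then have "snd (D!i!b) < fst (D!i!Suc a)" using segd_lt[OF sd _ lb] by simp
      moreover have "fst (D!i!Suc a) \<le> snd (D!i!Suc a)" using segd_seg[OF sd] \<open>Suc a < b\<close> lb by simp
      moreover have "snd (D!i!Suc a) < fst (D!i!a)" using segd_lt[OF sd, of a "Suc a"] \<open>Suc a < b\<close> lb by simp
      moreover have "fst (D!i!a) \<le> snd (D!i!a)" using segd_seg[OF sd, of a] A(3) lb by simp
      ultimately show False using e1 by simp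
    qed
    have "fst (\<tau> (i, Suc a)) < fst (\<tau> (i, a))" using T2 A(2) ab by blast
    then show False using A ab by simp
  qed
  show False
  proof (cases "j < j'")
    case True then show ?thesis using key[OF pi qi True] q pij tt[OF p] by simp
  next
    case False then have "j' < j" using jj by simp
    then show ?thesis using key[OF qi pi] q pij tt[OF p] by simp
  qed
qed

end



section \<open>Canonical order: structure\<close>

lemma block_snd: "s \<in># block m c \<Longrightarrow> snd s = c"
  by (simp add: block_def)

lemma block_sub: "block m c \<subseteq># m"
  by (simp add: block_def)

lemma asc_snd: "s \<in> set (asc_list c r) \<Longrightarrow> snd s = c"
  by (auto simp: asc_list_def)

lemma asc_len: "length (asc_list c r) = size r"
  by (simp add: asc_list_def size_mset[symmetric] del: size_mset)

lemma asc_mset: "(\<forall>s\<in>#r. snd s = c) \<Longrightarrow> mset (asc_list c r) = r"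
proof -
  assume a: "\<forall>s\<in>#r. snd s = c"
  have "mset (asc_list c r) = image_mset (\<lambda>a. (a, c)) (image_mset fst r)"
    by (simp add: asc_list_def)
  also have "\<dots> = image_mset (\<lambda>s. (fst s, c)) r" by (simp add: image_mset.compositionality comp_def)
  also have "\<dots> = image_mset id r"
    by (rule image_mset_cong) (use a in auto)
  finally show ?thesis by simp
qed

lemma asc_sorted: "sorted (map fst (asc_list c r))"
  by (simp add: asc_list_def comp_def)

lemma asc_empty[simp]: "asc_list c {#} = []"
  by (simp add: asc_list_def)

lemma asc_single: "snd s = c \<Longrightarrow> asc_list c {#s#} = [s]"
  by (cases s) (simp add: asc_list_def)

lemma canon_aux_snd: "s \<in> set (canon_aux m prev cs) \<Longrightarrow> snd s \<in> set cs"
proof (induction cs arbitrary: prev)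
  case Nil then show ?case by simp
next
  case (Cons c cs)
  then show ?case by (auto simp: Let_def dest: asc_snd)
qed

lemma canon_aux_cong: "(\<forall>c\<in>set cs. block m c = block m' c) \<Longrightarrow> canon_aux m prev cs = canon_aux m' prev cs"
  by (induction cs arbitrary: prev) (auto simp: Let_def)

lemma inter_empty_ends:
  assumes "\<forall>s\<in>#A. snd s = c" "\<forall>s\<in>#B. snd s \<noteq> c"
  shows "A \<inter># B = {#}"
proof (rule multiset_eqI)
  fix x
  show "count (A \<inter># B) x = count {#} x"
  proof (cases "snd x = c")
    case True then have "x \<notin># B" using assms(2) by auto
    then show ?thesis by (simp add: not_in_iff)
  next
    case False then have "x \<notin># A" using assms(1) by auto
    then show ?thesis by (simp add: not_in_iff)
  qed
qed

lemma diff_disj: "A \<inter># B = {#} \<Longrightarrow> A - B = A"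
proof (rule multiset_eqI)
  fix x assume "A \<inter># B = {#}"
  then have "min (count A x) (count B x) = 0" by (metis count_empty count_inter_mset)
  then show "count (A - B) x = count A x" by auto
qed

lemma canon_aux_skip:
  assumes "\<forall>s\<in>#prev. snd s \<noteq> c + 1"
  shows "canon_aux m prev (c # cs) = canon_aux m {#} (c # cs)"
proof -
  have "block m c \<inter># image_mset nu_inv prev = {#}"
    by (rule inter_empty_ends[where c=c]) (use assms in \<open>auto simp: block_def nu_inv_def\<close>)
  then show ?thesis by (simp add: Let_def diff_disj)
qed

lemma ends_desc_props: "sorted_wrt (>) (ends_desc m) \<and> set (ends_desc m) = snd ` set_mset m"
proof -
  have "sorted_wrt (<) (sorted_list_of_set (snd ` set_mset m))"
    by (rule strict_sorted_list_of_set)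
  then show ?thesis by (simp add: ends_desc_def sorted_wrt_rev)
qed

lemma ends_desc_char:
  assumes "sorted_wrt (>) L" "set L = snd ` set_mset m"
  shows "ends_desc m = L"
proof -
  have s1: "sorted_wrt (<) (rev L)" using assms(1) by (simp add: sorted_wrt_rev)
  have s2: "sorted_wrt (<) (sorted_list_of_set (snd ` set_mset m))"
    by (rule strict_sorted_list_of_set)
  have "sorted_list_of_set (snd ` set_mset m) = rev L"
    using strict_sorted_equal[OF s1 s2] assms(2) by simp
  then show ?thesis by (simp add: ends_desc_def)
qed

lemma ends_desc_cons:
  assumes "m \<noteq> {#}"
  obtains c cs where "ends_desc m = c # cs" "c \<in> snd ` set_mset m"
    "\<forall>x\<in>snd ` set_mset m. x \<le> c" "sorted_wrt (>) cs" "set cs = snd ` set_mset m - {c}"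
proof -
  have P: "sorted_wrt (>) (ends_desc m)" "set (ends_desc m) = snd ` set_mset m"
    using ends_desc_props by auto
  have "ends_desc m \<noteq> []" using P(2) assms by auto
  then obtain c cs where e: "ends_desc m = c # cs" by (cases "ends_desc m") auto
  have lt: "\<forall>x\<in>set cs. x < c" "sorted_wrt (>) cs"
    using P(1) e by auto
  then have "c \<notin> set cs" by auto
  then have "set cs = snd ` set_mset m - {c}" using P(2) e by auto
  moreover have "c \<in> snd ` set_mset m" "\<forall>x\<in>snd ` set_mset m. x \<le> c"
  proof -
    show "c \<in> snd ` set_mset m" using P(2) e by auto
    show "\<forall>x\<in>snd ` set_mset m. x \<le> c"
    proof
      fix x assume "x \<in> snd ` set_mset m"
      then have "x \<in> set (c # cs)" using P(2) e by simp
      then show "x \<le> c" using lt by auto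
    qed
  qed
  ultimately show ?thesis using that[OF e(1)] lt by blast
qed

definition "B1 m c = block m c"
definition "P2 m c = block m (c - 1) \<inter># image_mset nu_inv (block m c)"
definition "R2 m c = block m (c - 1) - P2 m c"

lemma P2_sub: "P2 m c \<subseteq># block m (c - 1)"
  by (simp add: P2_def)

lemma canon_struct:
  assumes "m \<noteq> {#}"
  obtains c cs2 where "c \<in> snd ` set_mset m" "\<forall>x\<in>snd ` set_mset m. x \<le> c"
    "sorted_wrt (>) cs2" "set cs2 = {x \<in> snd ` set_mset m. x < c - 1}"
    "canonical_order m = asc_list c (block m c) @ asc_list (c - 1) (R2 m c)
        @ rev (asc_list (c - 1) (P2 m c)) @ canon_aux m (R2 m c) cs2"
proof -
  obtain c cs where e: "ends_desc m = c # cs" "c \<in> snd ` set_mset m"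
    "\<forall>x\<in>snd ` set_mset m. x \<le> c" "sorted_wrt (>) cs" "set cs = snd ` set_mset m - {c}"
    using ends_desc_cons[OF assms] by blast
  have lt: "\<forall>x\<in>set cs. x < c" using e by force
  have c0: "canonical_order m = asc_list c (block m c) @ canon_aux m (block m c) cs"
    using e(1) by (simp add: canonical_order_def Let_def)
  show ?thesis
  proof (cases "c - 1 \<in> set cs")
    case True
    then obtain h t where cs: "cs = h # t" by (cases cs) auto
    have "h = c - 1"
    proof -
      have "c - 1 \<le> h" using True cs e(4) by auto
      moreover have "h < c" using lt cs by simp
      ultimately show ?thesis by simp
    qed
    moreover have "set t = {x \<in> snd ` set_mset m. x < c - 1}"
    proof -
      have tl: "\<forall>x\<in>set t. x < h" using e(4) cs by simp
      show ?thesis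
      proof
        show "set t \<subseteq> {x \<in> snd ` set_mset m. x < c - 1}" using e(5) cs \<open>h = c - 1\<close> tl by auto
        show "{x \<in> snd ` set_mset m. x < c - 1} \<subseteq> set t"
        proof
          fix x assume x: "x \<in> {x \<in> snd ` set_mset m. x < c - 1}"
          then have "x \<in> set cs" using e(5) by auto
          then show "x \<in> set t" using cs x \<open>h = c - 1\<close> by auto
        qed
      qed
    qed
    moreover have "sorted_wrt (>) t" using e(4) cs by simp
    moreover have "canon_aux m (block m c) cs = asc_list (c - 1) (R2 m c)
        @ rev (asc_list (c - 1) (P2 m c)) @ canon_aux m (R2 m c) t"
      using cs \<open>h = c - 1\<close> by (simp add: Let_def P2_def R2_def)
    ultimately have A: "set t = {x \<in> snd ` set_mset m. x < c - 1}" "sorted_wrt (>) t"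
       "canonical_order m = asc_list c (block m c) @ asc_list (c - 1) (R2 m c)
        @ rev (asc_list (c - 1) (P2 m c)) @ canon_aux m (R2 m c) t" using c0 by simp_all
    show ?thesis by (rule that[OF e(2) e(3) A(2) A(1) A(3)])
  next
    case False
    have b2: "block m (c - 1) = {#}"
    proof -
      have "c - 1 \<notin> snd ` set_mset m" using False e(5) by auto
      then show ?thesis by (auto simp: block_def filter_mset_eq_conv rev_image_eqI)
    qed
    have p: "P2 m c = {#}" "R2 m c = {#}" by (auto simp: P2_def R2_def b2)
    have "canon_aux m (block m c) cs = canon_aux m {#} cs"
    proof (cases cs)
      case Nil then show ?thesis by simp
    next
      case (Cons h t)
      have "h < c - 1" using False lt Cons by force
      have "\<forall>s\<in>#block m c. snd s \<noteq> h + 1" using \<open>h < c - 1\<close> block_snd by fastforce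
      then show ?thesis using Cons canon_aux_skip[of "block m c" h m t] by simp
    qed
    moreover have "set cs = {x \<in> snd ` set_mset m. x < c - 1}"
    proof
      show "set cs \<subseteq> {x \<in> snd ` set_mset m. x < c - 1}"
      proof
        fix x assume x: "x \<in> set cs"
        have "x \<noteq> c - 1" using x False by metis
        moreover have "x < c" using lt x by blast
        moreover have "x \<in> snd ` set_mset m" using x e(5) by blast
        ultimately show "x \<in> {x \<in> snd ` set_mset m. x < c - 1}" by simp
      qed
      show "{x \<in> snd ` set_mset m. x < c - 1} \<subseteq> set cs"
      proof
        fix x assume "x \<in> {x \<in> snd ` set_mset m. x < c - 1}"
        then have "x \<in> snd ` set_mset m" "x \<noteq> c" by auto
        then show "x \<in> set cs" using e(5) by blast
      qed
    qed
    ultimately have A: "canon_aux m (block m c) cs = canon_aux m {#} cs"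
        "set cs = {x \<in> snd ` set_mset m. x < c - 1}" by blast+
    have B: "canonical_order m = asc_list c (block m c) @ asc_list (c - 1) (R2 m c)
        @ rev (asc_list (c - 1) (P2 m c)) @ canon_aux m (R2 m c) cs"
      unfolding c0 p A(1) by simp
    show ?thesis by (rule that[OF e(2) e(3) e(4) A(2) B])
  qed
qed




lemma nu_fst[simp]: "fst (nu s) = fst s + 1" and nu_snd[simp]: "snd (nu s) = snd s + 1"
  by (simp_all add: nu_def)
lemma nu_inv_fst[simp]: "fst (nu_inv s) = fst s - 1" and nu_inv_snd[simp]: "snd (nu_inv s) = snd s - 1"
  by (simp_all add: nu_inv_def)
lemma nu_inv_nu[simp]: "nu_inv (nu s) = s" by (simp add: nu_def nu_inv_def)
lemma nu_nu_inv[simp]: "nu (nu_inv s) = s" by (simp add: nu_def nu_inv_def)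
lemma prod_eqI2: "fst a = fst b \<Longrightarrow> snd a = snd b \<Longrightarrow> a = b" by (cases a, cases b) simp

context reldec begin

lemma Urel: "(i,j) \<in> decomp_index D \<Longrightarrow> \<tau> (i,j) = (q,l) \<Longrightarrow> i < q \<Longrightarrow> D!i!j = nu (D!q!l)"
  using R2U[of "(i,j)"] by (simp add: piece_def)

lemma Lrel: "(i,j) \<in> decomp_index D \<Longrightarrow> \<tau> (i,j) = (q,l) \<Longrightarrow> q < i \<Longrightarrow> D!q!l = nu (D!i!j)"
  using R2L[of "(i,j)"] by (simp add: piece_def)

lemma tin2: "(i,j) \<in> decomp_index D \<Longrightarrow> \<tau> (i,j) = (q,l) \<Longrightarrow> q < length xs \<and> l < length (D!q)"
  using tin[of "(i,j)"] by (simp add: idx)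

lemma lenpos: "i < length xs \<Longrightarrow> 0 < length (D!i)"
  using segd_ne[OF dci] by simp

lemma idx0: "i < length xs \<Longrightarrow> (i,0) \<in> decomp_index D"
  using lenpos by (simp add: idx)

lemma last0: "(i,j) \<in> decomp_index D \<Longrightarrow> fst (\<tau> (i,j)) = 0 \<Longrightarrow> length (D!i) = Suc j"
proof (rule ccontr)
  assume a: "(i,j) \<in> decomp_index D" "fst (\<tau> (i,j)) = 0" "length (D!i) \<noteq> Suc j"
  then have "(i, Suc j) \<in> decomp_index D" by (simp add: idx)
  then have "fst (\<tau> (i, Suc j)) < fst (\<tau> (i,j))" using T2 by blast
  then show False using a by simp
qed

lemma single_piece: "i < length xs \<Longrightarrow> length (D!i) = 1 \<Longrightarrow> D!i!0 = xs!i"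
  using segd_single[OF dci] by fastforce

end

definition del2 :: "nat \<Rightarrow> 'a list \<Rightarrow> 'a list" where
  "del2 q L = tl (take q L) @ drop (Suc q) L"

locale cset = reldec xs D \<tau> for xs D \<tau> +
  fixes m :: "seg multiset" and c :: int and T :: "seg list"
  assumes blk2: "\<forall>x. size (block m x) \<le> 2"
    and xsdef: "xs = asc_list c (block m c) @ asc_list (c - 1) (R2 m c)
        @ rev (asc_list (c - 1) (P2 m c)) @ T"
    and Tends: "\<forall>s\<in>set T. snd s < c - 1"
    and cin: "block m c \<noteq> {#}"
begin

definition "k1 = size (block m c)"
definition "k2 = size (block m (c - 1))"
definition "A = asc_list c (block m c)"
definition "M = asc_list (c - 1) (R2 m c) @ rev (asc_list (c - 1) (P2 m c))"

lemma xsAMT: "xs = A @ M @ T" using xsdef by (simp add: A_def M_def)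

lemma lenA: "length A = k1" by (simp add: A_def k1_def asc_len)

lemma lenM: "length M = k2"
proof -
  have "size (R2 m c) + size (P2 m c) = size (block m (c - 1))"
    using P2_sub[of m c] size_mset_mono[OF P2_sub[of m c]] by (simp add: R2_def size_Diff_submset)
  then show ?thesis by (simp add: M_def k2_def asc_len)
qed

lemma k1_pos: "1 \<le> k1" using cin by (simp add: k1_def Suc_le_eq nonempty_has_size)
lemma k1_le: "k1 \<le> 2" using blk2 by (simp add: k1_def)
lemma k2_le: "k2 \<le> 2" using blk2 by (simp add: k2_def)

lemma len_ge: "k1 + k2 \<le> length xs" using xsAMT lenA lenM by simp

lemma ends_A: "i < k1 \<Longrightarrow> snd (xs!i) = c"
proof -
  assume "i < k1"
  then have "xs!i = A!i" "A!i \<in> set A" using xsAMT lenA by (simp_all add: nth_append)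
  then show ?thesis using asc_snd by (simp add: A_def)
qed

lemma xsM: "k1 \<le> i \<Longrightarrow> i < k1 + k2 \<Longrightarrow> xs!i = M!(i - k1)"
proof -
  assume a: "k1 \<le> i" "i < k1 + k2"
  then have "xs!i = (M @ T)!(i - k1)" using xsAMT lenA by (simp add: nth_append)
  moreover have "i - k1 < length M" using a lenM by simp
  ultimately show ?thesis by (simp add: nth_append)
qed

lemma setM: "s \<in> set M \<Longrightarrow> snd s = c - 1"
proof -
  assume "s \<in> set M"
  then have "s \<in> set (asc_list (c - 1) (R2 m c)) \<or> s \<in> set (asc_list (c - 1) (P2 m c))"
    by (simp add: M_def)
  then show ?thesis using asc_snd by blast
qed

lemma ends_M: "k1 \<le> i \<Longrightarrow> i < k1 + k2 \<Longrightarrow> snd (xs!i) = c - 1"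
proof -
  assume a: "k1 \<le> i" "i < k1 + k2"
  then have "M!(i-k1) \<in> set M" using lenM by simp
  then show ?thesis using xsM[OF a] setM by simp
qed

lemma ends_T: "k1 + k2 \<le> i \<Longrightarrow> i < length xs \<Longrightarrow> snd (xs!i) < c - 1"
proof -
  assume a: "k1 + k2 \<le> i" "i < length xs"
  then have "xs!i = (M @ T)!(i - k1)" using xsAMT lenA by (simp add: nth_append)
  also have "\<dots> = T!(i - k1 - length M)"
  proof -
    have "\<not> (i - k1 < length M)" using a lenM by linarith
    then show ?thesis by (simp add: nth_append)
  qed
  also have "\<dots> = T!(i - k1 - k2)" using lenM by simp
  finally have "xs!i = T!(i - k1 - k2)" .
  moreover have "i - k1 - k2 < length T" using a xsAMT lenA lenM by simp
  ultimately show ?thesis using Tends by simp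
qed

lemma ends_le: "k1 \<le> i \<Longrightarrow> i < length xs \<Longrightarrow> snd (xs!i) \<le> c - 1"
proof -
  assume a: "k1 \<le> i" "i < length xs"
  show ?thesis
  proof (cases "i < k1 + k2")
    case True then show ?thesis using ends_M a by simp
  next
    case False then have "snd (xs!i) < c - 1" using ends_T a by simp
    then show ?thesis by simp
  qed
qed

lemma mset_A: "mset A = block m c"
  by (simp add: A_def asc_mset block_def)

lemma mset_M: "mset M = block m (c - 1)"
proof -
  have "mset M = R2 m c + P2 m c"
    by (simp add: M_def asc_mset) (metis (no_types, lifting) P2_sub R2_def asc_mset block_snd
       mset_subset_eqD diff_subset_eq_self)
  then show ?thesis using P2_sub[of m c] by (simp add: R2_def)
qed

end



context cset begin

lemma xsA: "i < k1 \<Longrightarrow> xs!i = A!i"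
  using xsAMT lenA by (simp add: nth_append)

lemma A1: "k1 = 1 \<Longrightarrow> A = [xs!0]"
proof -
  assume k: "k1 = 1"
  then obtain a where "A = [a]" using lenA by (cases A) auto
  then show ?thesis using xsA[of 0] k by simp
qed

lemma A2: "k1 = 2 \<Longrightarrow> A = [xs!0, xs!1]"
proof -
  assume k: "k1 = 2"
  then obtain a b where "A = [a, b]" using lenA
    by (cases A; cases "tl A") auto
  then show ?thesis using xsA[of 0] xsA[of 1] k by simp
qed

lemma A2_sorted: "k1 = 2 \<Longrightarrow> fst (xs!0) \<le> fst (xs!1)"
proof -
  assume k: "k1 = 2"
  have "sorted (map fst A)" using asc_sorted by (simp add: A_def)
  then show ?thesis using A2[OF k] by simp
qed

lemma M2: "k2 = 2 \<Longrightarrow> M = [xs!k1, xs!(Suc k1)]"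
proof -
  assume k: "k2 = 2"
  then obtain a b where ab: "M = [a, b]" using lenM
    by (cases M; cases "tl M") auto
  have "xs!k1 = M!0" "xs!(Suc k1) = M!1" using xsM[of k1] xsM[of "Suc k1"] k by simp_all
  then show ?thesis using ab by simp
qed

lemma S6: assumes "k1 = 1" "k2 = 2" "xs!1 = nu_inv (xs!0)" "xs!2 \<noteq> xs!1" shows False
proof -
  have b1: "block m c = {#xs!0#}" using mset_A A1[OF assms(1)] by simp
  have Mx: "M = [xs!1, xs!2]" using M2[OF assms(2)] assms(1) by (simp add: numeral_eq_Suc)
  have b2: "block m (c - 1) = {#xs!1, xs!2#}" using mset_M Mx by simp
  have p: "P2 m c = {#xs!1#}" using b1 b2 assms(3) by (simp add: P2_def)
  have r: "R2 m c = {#xs!2#}" using b2 p by (simp add: R2_def)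
  have s1: "snd (xs!1) = c - 1" "snd (xs!2) = c - 1" using ends_M assms(1,2) by auto
  have "M = asc_list (c - 1) (R2 m c) @ rev (asc_list (c - 1) (P2 m c))" by (rule M_def)
  also have "\<dots> = [xs!2] @ rev [xs!1]"
    by (simp only: p r asc_single[OF s1(1)] asc_single[OF s1(2)])
  finally have "M = [xs!2, xs!1]" by simp
  then have "M!0 = xs!2" by simp
  moreover have "M!0 = xs!1" using Mx by simp
  ultimately show False using assms(4) by simp
qed

lemma S7: assumes "k1 = 2" "k2 = 2" "xs!2 = nu_inv (xs!0)" "xs!3 = nu_inv (xs!1)"
  shows "fst (xs!3) \<le> fst (xs!2)"
proof -
  have b1: "block m c = {#xs!0, xs!1#}" using mset_A A2[OF assms(1)] by simp
  have Mx: "M = [xs!2, xs!3]" using M2[OF assms(2)] assms(1) by (simp add: numeral_eq_Suc)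
  have b2: "block m (c - 1) = {#xs!2, xs!3#}" using mset_M Mx by simp
  have "image_mset nu_inv (block m c) = block m (c - 1)" using b1 b2 assms(3,4) by simp
  then have p: "P2 m c = block m (c - 1)" by (simp add: P2_def)
  then have r: "R2 m c = {#}" by (simp add: R2_def)
  have "M = asc_list (c - 1) (R2 m c) @ rev (asc_list (c - 1) (P2 m c))" by (rule M_def)
  then have "M = rev (asc_list (c - 1) (block m (c - 1)))" by (simp only: p r asc_empty append_Nil)
  moreover have "sorted (map fst (asc_list (c - 1) (block m (c - 1))))" by (rule asc_sorted)
  ultimately have "sorted (map fst (rev M))" by simp
  then show ?thesis using Mx by simp
qed

end



context cset begin

lemma lenxs_k1: "i < k1 \<Longrightarrow> i < length xs" using len_ge by simp

lemma top_partner: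
  assumes "i < k1" "\<tau> (i,0) = (q,l)" "i < q" "k1 \<le> q"
  shows "l = 0 \<and> q < k1 + k2"
proof -
  have i: "i < length xs" using lenxs_k1 assms(1) .
  have pi: "(i,0) \<in> decomp_index D" using idx0[OF i] .
  have ql: "q < length xs" "l < length (D!q)" using tin2[OF pi assms(2)] by auto
  have u: "D!i!0 = nu (D!q!l)" using Urel[OF pi assms(2,3)] .
  have "snd (D!i!0) = c" using segd_hd[OF dci[OF i]] ends_A[OF assms(1)] by simp
  then have s: "snd (D!q!l) = c - 1" using u by simp
  have le: "snd (D!q!l) \<le> snd (xs!q)" using segd_le_snd[OF dci[OF ql(1)] ql(2)] .
  have qk: "q < k1 + k2"
  proof (rule ccontr)
    assume "\<not> q < k1 + k2"
    then have "snd (xs!q) < c - 1" using ends_T ql(1) by simp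
    then show False using le s by simp
  qed
  have "snd (xs!q) \<le> c - 1" using ends_le assms(4) ql(1) by simp
  then have "snd (D!q!l) = snd (xs!q)" using le s by simp
  then have "l = 0" using segd_snd_eq[OF dci[OF ql(1)] ql(2)] by simp
  then show ?thesis using qk by simp
qed

lemma pieces_gt: "(i,j) \<in> decomp_index D \<Longrightarrow> fst (D!i!j) \<le> snd (D!i!j)"
  using segd_seg[OF dci] by (simp add: idx)

lemma local_k1:
  assumes k: "k1 = 1"
  shows "\<exists>q. 0 < q \<and> q < length xs \<and> length (D!0) = 1 \<and> length (D!q) = 1 \<and> \<tau> (0,0) = (q,0)
     \<and> xs!q = nu_inv (xs!0) \<and> k1 \<le> q \<and> q < k1 + k2"
proof -
  have x0: "0 < length xs" using lenxs_k1 k by simp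
  have p0: "(0,0) \<in> decomp_index D" using idx0[OF x0] .
  obtain q l where ql: "\<tau> (0,0) = (q,l)" by (cases "\<tau> (0,0)")
  have q0: "q \<noteq> 0" using R1[OF p0] ql by simp
  have tp: "l = 0 \<and> q < k1 + k2" using top_partner[of 0 q l] k ql q0 by simp
  then have ql0: "\<tau> (0,0) = (q,0)" using ql by simp
  have qi: "(q,0) \<in> decomp_index D" using tin[OF p0] ql0 by simp
  have tq: "\<tau> (q,0) = (0,0)" using tt[OF p0] ql0 by simp
  have lq: "length (D!q) = 1" using last0[OF qi] tq by simp
  have qlen: "q < length xs" using qi by (simp add: idx)
  have l0: "length (D!0) = 1"
  proof (rule ccontr)
    assume ne: "length (D!0) \<noteq> 1"
    moreover have "0 < length (D!0)" using lenpos[OF x0] .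
    ultimately have "1 < length (D!0)" by linarith
    then have p1: "(0,1) \<in> decomp_index D" using x0 by (simp add: idx)
    obtain q' l' where ql': "\<tau> (0,1) = (q',l')" by (cases "\<tau> (0,1)")
    have "q' < q" using R3[OF p1, of 0] ql' ql0 by simp
    moreover have "q' \<noteq> 0" using R1[OF p1] ql' by simp
    ultimately have qq: "q' = 1" "q = 2" "k2 = 2" using tp k k2_le by auto
    have u1: "D!0!1 = nu (D!1!l')" using Urel[OF p1 ql'] qq by simp
    have p1': "(1,l') \<in> decomp_index D" using tin[OF p1] ql' qq by simp
    have "\<tau> (1,l') = (0,1)" using tt[OF p1] ql' qq by simp
    then have len1: "length (D!1) = Suc l'" using last0[OF p1'] by simp
    have len0: "length (D!0) = 2"
    proof (rule ccontr)
      assume "length (D!0) \<noteq> 2"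
      then have p2: "(0,2) \<in> decomp_index D" using \<open>1 < length (D!0)\<close> x0 by (simp add: idx)
      have "fst (\<tau> (0,2)) < fst (\<tau> (0,1))" using R3[OF p2, of 1] by simp
      then have "fst (\<tau> (0,2)) = 0" using ql' qq by simp
      then show False using R1[OF p2] by simp
    qed
    have x1: "1 < length xs" using qlen qq by simp
    have f0: "fst (xs!0) = fst (D!0!1)" using segd_last[OF dci[OF x0]] len0 by simp
    have f1: "fst (xs!1) = fst (D!1!l')" using segd_last[OF dci[OF x1]] len1 by simp
    have s0: "snd (xs!0) = c" using ends_A k by simp
    have s1: "snd (xs!1) = c - 1" using ends_M k qq by simp
    have e1: "xs!1 = nu_inv (xs!0)"
      by (rule prod_eqI2) (use f0 f1 u1 s0 s1 in simp_all)
    have x2: "xs!2 = D!2!0" using single_piece[of 2] lq qq qlen by simp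
    have u0: "D!0!0 = nu (D!2!0)" using Urel[OF p0 ql0] qq by simp
    have "snd (D!0!1) < fst (D!0!0)" using segd_lt[OF dci[OF x0], of 0 1] len0 by simp
    moreover have "fst (D!0!1) \<le> snd (D!0!1)" using pieces_gt[OF p1] .
    ultimately have "fst (xs!1) < fst (xs!2)" using f0 f1 u1 x2 u0 by simp
    then have "xs!2 \<noteq> xs!1" by auto
    then show False using S6 k qq e1 by simp
  qed
  have "xs!0 = D!0!0" using single_piece[OF x0 l0] by simp
  moreover have "xs!q = D!q!0" using single_piece[OF qlen lq] by simp
  moreover have "D!0!0 = nu (D!q!0)" using Urel[OF p0 ql0] q0 by simp
  ultimately have "xs!q = nu_inv (xs!0)" by simp
  then show ?thesis using q0 qlen l0 lq ql0 tp k by auto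
qed

end



context cset begin

lemma local_k2:
  assumes k: "k1 = 2"
  shows "\<exists>q. 0 < q \<and> q < length xs \<and> length (D!0) = 1 \<and> length (D!q) = 1 \<and> \<tau> (0,0) = (q,0)
     \<and> xs!q = nu_inv (xs!0) \<and> k1 \<le> q \<and> q < k1 + k2 \<and> k2 = 2 \<and> xs!(5-q) = nu_inv (xs!1)"
proof -
  have x0: "0 < length xs" using lenxs_k1[of 0] k by simp
  have x1: "1 < length xs" using lenxs_k1[of 1] k by simp
  have p0: "(0,0) \<in> decomp_index D" using idx0[OF x0] .
  have p10: "(1,0) \<in> decomp_index D" using idx0[OF x1] .
  have srt: "fst (xs!0) \<le> fst (xs!1)" using A2_sorted[OF k] .
  have C0: "fst (\<tau> (0,j)) \<noteq> 1" if pj: "(0,j) \<in> decomp_index D" for j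
  proof
    assume a: "fst (\<tau> (0,j)) = 1"
    obtain l where tl: "\<tau> (0,j) = (1,l)" using a by (cases "\<tau> (0,j)") auto
    have u: "D!0!j = nu (D!1!l)" using Urel[OF pj tl] by simp
    have l1: "l < length (D!1)" using tin2[OF pj tl] by simp
    have lenj: "length (D!0) = Suc j"
    proof (rule ccontr)
      assume "length (D!0) \<noteq> Suc j"
      then have ps: "(0, Suc j) \<in> decomp_index D" using pj by (simp add: idx)
      have "fst (\<tau> (0, Suc j)) < fst (\<tau> (0,j))" using T2 ps by blast
      then have "fst (\<tau> (0, Suc j)) = 0" using a by simp
      then show False using R1[OF ps] by simp
    qed
    have "fst (xs!0) = fst (D!0!j)" using segd_last[OF dci[OF x0]] lenj by simp
    moreover have "fst (xs!1) \<le> fst (D!1!l)" using segd_ge_fst[OF dci[OF x1] l1] .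
    ultimately show False using u srt by simp
  qed
  have G0: "2 \<le> fst (\<tau> (0,j))" if pj: "(0,j) \<in> decomp_index D" for j
    using C0[OF pj] R1[OF pj] by (cases "fst (\<tau> (0,j))") auto
  have G1: "2 \<le> fst (\<tau> (1,j))" if pj: "(1,j) \<in> decomp_index D" for j
  proof -
    have n1: "fst (\<tau> (1,j)) \<noteq> 1" using R1[OF pj] by simp
    have n0: "fst (\<tau> (1,j)) \<noteq> 0"
    proof
      assume a: "fst (\<tau> (1,j)) = 0"
      obtain l where tl: "\<tau> (1,j) = (0,l)" using a by (cases "\<tau> (1,j)") auto
      have "(0,l) \<in> decomp_index D" using tin[OF pj] tl by simp
      moreover have "\<tau> (0,l) = (1,j)" using tt[OF pj] tl by simp
      ultimately show False using C0 by fastforce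
    qed
    show ?thesis using n0 n1 by linarith
  qed
  obtain q0 l0 where t0: "\<tau> (0,0) = (q0,l0)" by (cases "\<tau> (0,0)")
  obtain q1 l1 where t1: "\<tau> (1,0) = (q1,l1)" by (cases "\<tau> (1,0)")
  have g0: "2 \<le> q0" using G0[OF p0] t0 by simp
  have g1: "2 \<le> q1" using G1[OF p10] t1 by simp
  have tp0: "l0 = 0 \<and> q0 < k1 + k2" using top_partner[of 0 q0 l0] k t0 g0 by simp
  have tp1: "l1 = 0 \<and> q1 < k1 + k2" using top_partner[of 1 q1 l1] k t1 g1 by simp
  have t0': "\<tau> (0,0) = (q0,0)" and t1': "\<tau> (1,0) = (q1,0)" using t0 t1 tp0 tp1 by simp_all
  have qne: "q0 \<noteq> q1"
  proof
    assume "q0 = q1"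
    then have "\<tau> (0,0) = \<tau> (1,0)" using t0' t1' by simp
    then have "\<tau> (\<tau> (0,0)) = \<tau> (\<tau> (1,0))" by simp
    then show False using tt[OF p0] tt[OF p10] by simp
  qed
  have k2: "k2 = 2" using qne g0 g1 tp0 tp1 k k2_le by linarith
  have q01: "(q0 = 2 \<and> q1 = 3) \<or> (q0 = 3 \<and> q1 = 2)" using qne g0 g1 tp0 tp1 k k2 by linarith
  have pq0: "(q0,0) \<in> decomp_index D" using tin[OF p0] t0' by simp
  have pq1: "(q1,0) \<in> decomp_index D" using tin[OF p10] t1' by simp
  have tq0: "\<tau> (q0,0) = (0,0)" using tt[OF p0] t0' by simp
  have tq1: "\<tau> (q1,0) = (1,0)" using tt[OF p10] t1' by simp
  have lq0: "length (D!q0) = 1" using last0[OF pq0] tq0 by simp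
  have xq0: "q0 < length xs" and xq1: "q1 < length xs" using pq0 pq1 by (simp_all add: idx)
  have l0: "length (D!0) = 1"
  proof (rule ccontr)
    assume ne: "length (D!0) \<noteq> 1"
    moreover have "0 < length (D!0)" using lenpos[OF x0] .
    ultimately have gt: "1 < length (D!0)" by linarith
    then have p01: "(0,1) \<in> decomp_index D" using x0 by (simp add: idx)
    obtain j1 l where tl: "\<tau> (0,1) = (j1,l)" by (cases "\<tau> (0,1)")
    have "j1 < q0" using R3[OF p01, of 0] tl t0' by simp
    moreover have "2 \<le> j1" using G0[OF p01] tl by simp
    ultimately have qq: "q0 = 3" "q1 = 2" "j1 = 2" using q01 by auto
    have pl: "(2,l) \<in> decomp_index D" using tin[OF p01] tl qq by simp
    have t2l: "\<tau> (2,l) = (0,1)" using tt[OF p01] tl qq by simp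
    have t20: "\<tau> (2,0) = (1,0)" using tq1 qq by simp
    have lnz: "l \<noteq> 0"
    proof
      assume "l = 0" then have "\<tau> (2,l) = (1,0)" using t20 by simp
      then show False using t2l by simp
    qed
    have l1: "l = 1"
    proof (rule ccontr)
      assume "l \<noteq> 1"
      then have "1 < l" using lnz by simp
      then have "fst (\<tau> (2,l)) < fst (\<tau> (2,1))" using R3[OF pl] by simp
      moreover have "(2,1) \<in> decomp_index D" using pl \<open>1 < l\<close> by (simp add: idx)
      then have "fst (\<tau> (2,1)) < fst (\<tau> (2,0))" using R3[of 2 1 0] by simp
      ultimately show False using t2l t20 by simp
    qed
    have len2: "length (D!2) = 2" using last0[OF pl] t2l l1 by simp
    have len0: "length (D!0) = 2"
    proof (rule ccontr)
      assume "length (D!0) \<noteq> 2"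
      then have p2: "(0,2) \<in> decomp_index D" using gt x0 by (simp add: idx)
      have "fst (\<tau> (0,2)) < fst (\<tau> (0,1))" using R3[OF p2, of 1] by simp
      then show False using G0[OF p2] tl qq by simp
    qed
    have len1: "length (D!1) = 1"
    proof (rule ccontr)
      assume "length (D!1) \<noteq> 1"
      moreover have "0 < length (D!1)" using lenpos[OF x1] .
      ultimately have "1 < length (D!1)" by linarith
      then have "(1,1) \<in> decomp_index D" using x1 by (simp add: idx)
      then have "fst (\<tau> (1,1)) < fst (\<tau> (1,0))" "2 \<le> fst (\<tau> (1,1))" using R3[of 1 1 0] G1 by auto
      then show False using t1' qq by simp
    qed
    have x2: "2 < length xs" and x3: "3 < length xs" using xq0 xq1 qq by simp_all
    have d3: "xs!3 = D!3!0" using single_piece[OF x3] lq0 qq by simp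
    have u00: "D!0!0 = nu (D!3!0)" using Urel[OF p0 t0'] qq by simp
    have u01: "D!0!1 = nu (D!2!1)" using Urel[OF p01 tl] qq l1 by simp
    have u10: "D!1!0 = nu (D!2!0)" using Urel[OF p10 t1'] qq by simp
    have d1: "xs!1 = D!1!0" using single_piece[OF x1 len1] by simp
    have s2: "snd (D!2!0) = c - 1" using segd_hd[OF dci[OF x2]] ends_M[of 2] k k2 by simp
    have f2: "fst (D!2!1) = fst (xs!2)" using segd_last[OF dci[OF x2]] len2 by simp
    have a2: "snd (D!2!1) = fst (D!2!0) - 1" using segd_adj[OF dci[OF x2], of 0] len2 by simp
    have s0: "snd (D!0!0) = c" using segd_hd[OF dci[OF x0]] ends_A[of 0] k by simp
    have f0: "fst (D!0!1) = fst (xs!0)" using segd_last[OF dci[OF x0]] len0 by simp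
    have a0: "snd (D!0!1) = fst (D!0!0) - 1" using segd_adj[OF dci[OF x0], of 0] len0 by simp
    have g01: "fst (D!0!1) \<le> snd (D!0!1)" using pieces_gt[OF p01] .
    have sx0: "snd (xs!0) = c" using ends_A[of 0] k by simp
    have sx2: "snd (xs!2) = c - 1" using ends_M[of 2] k k2 by simp
    have e2: "xs!2 = nu_inv (xs!0)"
      by (rule prod_eqI2) (use f2 u01 f0 sx0 sx2 in simp_all)
    have e3: "xs!3 = nu_inv (xs!1)"
      by (rule prod_eqI2) (use d3 d1 u00 u10 u01 a2 a0 s2 s0 in simp_all)
    have "fst (xs!3) \<le> fst (xs!2)" using S7[OF k k2 e2 e3] .
    then show False using d3 u00 f2 u01 f0 a0 g01 by simp
  qed
  have l1: "length (D!1) = 1"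
  proof (rule ccontr)
    assume "length (D!1) \<noteq> 1"
    moreover have "0 < length (D!1)" using lenpos[OF x1] .
    ultimately have "1 < length (D!1)" by linarith
    then have p11: "(1,1) \<in> decomp_index D" using x1 by (simp add: idx)
    obtain j l where tl: "\<tau> (1,1) = (j,l)" by (cases "\<tau> (1,1)")
    have "j < q1" using R3[OF p11, of 0] tl t1' by simp
    moreover have "2 \<le> j" using G1[OF p11] tl by simp
    ultimately have qq: "q1 = 3" "q0 = 2" "j = 2" using q01 by auto
    have "l < length (D!2)" using tin2[OF p11 tl] qq by simp
    then have "l = 0" using lq0 qq by simp
    then have "\<tau> (2,0) = (1,1)" using tt[OF p11] tl qq by simp
    then show False using tq0 qq by simp
  qed
  have lq1: "length (D!q1) = 1"
  proof (rule ccontr)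
    assume "length (D!q1) \<noteq> 1"
    moreover have "0 < length (D!q1)" using lenpos[OF xq1] .
    ultimately have "1 < length (D!q1)" by linarith
    then have pq11: "(q1,1) \<in> decomp_index D" using xq1 by (simp add: idx)
    obtain j l where tl: "\<tau> (q1,1) = (j,l)" by (cases "\<tau> (q1,1)")
    have "j < 1" using R3[OF pq11, of 0] tl tq1 by simp
    then have j0: "j = 0" by simp
    have "l < length (D!0)" using tin2[OF pq11 tl] j0 by simp
    then have "l = 0" using l0 by simp
    then have "\<tau> (0,0) = (q1,1)" using tt[OF pq11] tl j0 by simp
    then show False using t0' by simp
  qed
  have "xs!q0 = nu_inv (xs!0)"
  proof -
    have "xs!0 = D!0!0" using single_piece[OF x0 l0] by simp
    moreover have "xs!q0 = D!q0!0" using single_piece[OF xq0 lq0] by simp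
    moreover have "D!0!0 = nu (D!q0!0)" using Urel[OF p0 t0'] g0 by simp
    ultimately show ?thesis by simp
  qed
  moreover have "xs!q1 = nu_inv (xs!1)"
  proof -
    have "xs!1 = D!1!0" using single_piece[OF x1 l1] by simp
    moreover have "xs!q1 = D!q1!0" using single_piece[OF xq1 lq1] by simp
    moreover have "D!1!0 = nu (D!q1!0)" using Urel[OF p10 t1'] g1 by simp
    ultimately show ?thesis by simp
  qed
  moreover have "q1 = 5 - q0" using q01 by auto
  ultimately show ?thesis using g0 xq0 l0 lq0 t0' tp0 k k2 by (intro exI[of _ q0]) auto
qed

end



lemma del2_len: "0 < q \<Longrightarrow> q < length L \<Longrightarrow> length (del2 q L) = length L - 2"
  by (simp add: del2_def)

lemma del2_nth: "0 < q \<Longrightarrow> q < length L \<Longrightarrow> k < length L - 2 \<Longrightarrow>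
   del2 q L ! k = L ! (if k < q - 1 then Suc k else k + 2)"
proof -
  assume a: "0 < q" "q < length L" "k < length L - 2"
  have lt: "length (tl (take q L)) = q - 1" using a by simp
  show ?thesis
  proof (cases "k < q - 1")
    case True
    then have "del2 q L ! k = tl (take q L) ! k" using lt by (simp add: del2_def nth_append)
    also have "\<dots> = take q L ! Suc k" using True a by (simp add: nth_tl)
    also have "\<dots> = L ! Suc k" using True a by simp
    finally show ?thesis using True by simp
  next
    case False
    then have "del2 q L ! k = drop (Suc q) L ! (k - (q - 1))" using lt by (simp add: del2_def nth_append)
    also have "\<dots> = L ! (Suc q + (k - (q - 1)))" using False a by (simp add: nth_drop)
    also have "Suc q + (k - (q - 1)) = k + 2" using False a by simp
    finally show ?thesis using False by simp
  qed
qed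

lemma del2_rel:
  assumes R: "reldec xs D \<tau>" and q: "0 < q" "q < length xs"
    and l0: "length (D!0) = 1" and lq: "length (D!q) = 1" and t0: "\<tau> (0,0) = (q,0)"
  shows "\<exists>\<tau>'. reldec (del2 q xs) (del2 q D) \<tau>'"
proof -
  interpret reldec xs D \<tau> by (rule R)
  define n where "n = length xs"
  define g where "g = (\<lambda>k::nat. if k < q - 1 then Suc k else k + 2)"
  define h where "h = (\<lambda>i::nat. if i < q then i - 1 else i - 2)"
  have lD: "length D = n" using lenD n_def by simp
  have len': "length (del2 q xs) = n - 2" "length (del2 q D) = n - 2"
    using del2_len[of q xs] del2_len[of q D] q lD n_def by simp_all
  have nthx: "del2 q xs ! k = xs ! g k" if "k < n - 2" for k
    using del2_nth[of q xs k] q that n_def g_def by simp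
  have nthD: "del2 q D ! k = D ! g k" if "k < n - 2" for k
    using del2_nth[of q D k] q that lD g_def n_def by simp
  have gr: "g k < n \<and> g k \<noteq> 0 \<and> g k \<noteq> q" if "k < n - 2" for k
    using that q n_def by (auto simp: g_def)
  have hg: "h (g k) = k" for k by (auto simp: g_def h_def)
  have gh: "g (h i) = i" if "i \<noteq> 0" "i \<noteq> q" for i using that q by (auto simp: g_def h_def)
  have hr: "h i < n - 2" if "i < n" "i \<noteq> 0" "i \<noteq> q" for i using that q n_def by (auto simp: h_def)
  have hmono: "h i < h i' \<longleftrightarrow> i < i'" if "i \<noteq> 0" "i \<noteq> q" "i' \<noteq> 0" "i' \<noteq> q" for i i'
    using that q by (auto simp: h_def)
  have I': "(k,j) \<in> decomp_index (del2 q D) \<longleftrightarrow> k < n - 2 \<and> (g k, j) \<in> decomp_index D" for k j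
  proof -
    have "(k,j) \<in> decomp_index (del2 q D) \<longleftrightarrow> k < n - 2 \<and> j < length (del2 q D ! k)"
      using len' by (simp add: decomp_index_def)
    also have "\<dots> \<longleftrightarrow> k < n - 2 \<and> (g k, j) \<in> decomp_index D"
      using nthD gr by (auto simp: idx n_def)
    finally show ?thesis .
  qed
  have avoid: "fst (\<tau> p) \<noteq> 0 \<and> fst (\<tau> p) \<noteq> q"
    if p: "p \<in> decomp_index D" "fst p \<noteq> 0" "fst p \<noteq> q" for p
  proof -
    have tp: "\<tau> p \<in> decomp_index D" using tin[OF p(1)] .
    have a0: "fst (\<tau> p) \<noteq> 0"
    proof
      assume e: "fst (\<tau> p) = 0"
      then have "snd (\<tau> p) < 1" using tp l0 by (cases "\<tau> p") (simp add: idx)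
      then have "\<tau> p = (0,0)" using e by (cases "\<tau> p") simp
      then have "p = (q,0)" using tt[OF p(1)] t0 by metis
      then show False using p by simp
    qed
    have aq: "fst (\<tau> p) \<noteq> q"
    proof
      assume e: "fst (\<tau> p) = q"
      then have "snd (\<tau> p) < 1" using tp lq by (cases "\<tau> p") (simp add: idx)
      then have "\<tau> p = (q,0)" using e by (cases "\<tau> p") simp
      moreover have "0 < length xs" using q by linarith
      then have "\<tau> (q,0) = (0,0)" using tt[OF idx0[of 0]] t0 by simp
      ultimately have "p = (0,0)" using tt[OF p(1)] by metis
      then show False using p by simp
    qed
    show ?thesis using a0 aq by simp
  qed
  define \<tau>' where "\<tau>' = (\<lambda>(k,j). (h (fst (\<tau> (g k, j))), snd (\<tau> (g k, j))))"
  have key: "(k,j) \<in> decomp_index (del2 q D) \<Longrightarrow>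
     (g k, j) \<in> decomp_index D \<and> fst (\<tau> (g k, j)) \<noteq> 0 \<and> fst (\<tau> (g k, j)) \<noteq> q \<and>
     g (fst (\<tau>' (k,j))) = fst (\<tau> (g k, j)) \<and> snd (\<tau>' (k,j)) = snd (\<tau> (g k, j)) \<and>
     fst (\<tau> (g k, j)) < n" for k j
  proof -
    assume a: "(k,j) \<in> decomp_index (del2 q D)"
    then have k: "k < n - 2" and p: "(g k, j) \<in> decomp_index D" using I' by auto
    have av: "fst (\<tau> (g k, j)) \<noteq> 0" "fst (\<tau> (g k, j)) \<noteq> q" using avoid[OF p] gr[OF k] by auto
    have "fst (\<tau> (g k, j)) < n" using tin[OF p] by (cases "\<tau> (g k, j)") (simp add: idx n_def)
    then show ?thesis using p av gh by (simp add: \<tau>'_def)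
  qed
  have rel: "reldec (del2 q xs) (del2 q D) \<tau>'"
  proof
    show "is_decomp (del2 q xs) (del2 q D)"
      unfolding is_decomp_def using len' nthx nthD gr dci n_def by auto
    show "\<forall>p\<in>decomp_index (del2 q D). \<tau>' p \<in> decomp_index (del2 q D) \<and> \<tau>' (\<tau>' p) = p \<and> \<tau>' p \<noteq> p"
    proof
      fix p assume pa: "p \<in> decomp_index (del2 q D)"
      obtain k j where pkj: "p = (k,j)" by (cases p)
      note K = key[OF pa[unfolded pkj]]
      have k: "k < n - 2" using pa pkj I' by auto
      obtain a b where ab: "\<tau> (g k, j) = (a,b)" by (cases "\<tau> (g k, j)")
      have tab: "(a,b) \<in> decomp_index D" using tin K ab by metis
      have ne: "a \<noteq> 0" "a \<noteq> q" "a < n" using K ab by auto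
      have t1: "\<tau>' p = (h a, b)" using pkj ab by (simp add: \<tau>'_def)
      have in1: "(h a, b) \<in> decomp_index (del2 q D)"
        using I' hr[OF ne(3) ne(1) ne(2)] gh[OF ne(1) ne(2)] tab by simp
      have t2: "\<tau>' (h a, b) = (h (fst (\<tau> (a,b))), snd (\<tau> (a,b)))"
        using gh[OF ne(1) ne(2)] by (simp add: \<tau>'_def)
      have "\<tau> (a,b) = (g k, j)" using tt K ab by metis
      then have t3: "\<tau>' (\<tau>' p) = p" using t1 t2 hg pkj by simp
      have t4: "\<tau>' p \<noteq> p"
      proof
        assume "\<tau>' p = p"
        then have "h a = k" "b = j" using t1 pkj by auto
        then have "a = g k" using gh[OF ne(1) ne(2)] by metis
        then have "\<tau> (g k, j) = (g k, j)" using ab \<open>b = j\<close> by simp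
        then show False using tne K by metis
      qed
      show "\<tau>' p \<in> decomp_index (del2 q D) \<and> \<tau>' (\<tau>' p) = p \<and> \<tau>' p \<noteq> p"
        using in1 t1 t3 t4 by simp
    qed
    show "\<forall>i j. (i, Suc j) \<in> decomp_index (del2 q D) \<longrightarrow> fst (\<tau>' (i, Suc j)) < fst (\<tau>' (i, j))"
    proof (intro allI impI)
      fix i j assume a: "(i, Suc j) \<in> decomp_index (del2 q D)"
      have a': "(i, j) \<in> decomp_index (del2 q D)" using a by (simp add: decomp_index_def)
      note K1 = key[OF a] and K2 = key[OF a']
      have p: "(g i, Suc j) \<in> decomp_index D" using K1 by simp
      have lt: "fst (\<tau> (g i, Suc j)) < fst (\<tau> (g i, j))" using T2 p by blast
      have "fst (\<tau>' (i, Suc j)) = h (fst (\<tau> (g i, Suc j)))" by (simp add: \<tau>'_def)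
      moreover have "fst (\<tau>' (i, j)) = h (fst (\<tau> (g i, j)))" by (simp add: \<tau>'_def)
      ultimately show "fst (\<tau>' (i, Suc j)) < fst (\<tau>' (i, j))"
        using hmono K1 K2 lt by simp
    qed
    show "\<forall>p\<in>decomp_index (del2 q D). lex_less p (\<tau>' p) \<longrightarrow> piece (del2 q D) p = nu (piece (del2 q D) (\<tau>' p))"
    proof (intro ballI impI)
      fix p assume pa: "p \<in> decomp_index (del2 q D)" and ll: "lex_less p (\<tau>' p)"
      obtain k j where pkj: "p = (k,j)" by (cases p)
      note K = key[OF pa[unfolded pkj]]
      have k: "k < n - 2" using pa pkj I' by auto
      obtain a b where ab: "\<tau> (g k, j) = (a,b)" by (cases "\<tau> (g k, j)")
      have ne: "a \<noteq> 0" "a \<noteq> q" "a < n" using K ab by auto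
      have t1: "\<tau>' p = (h a, b)" using pkj ab by (simp add: \<tau>'_def)
      have "h a < n - 2" using hr ne by simp
      have gk: "g k \<noteq> 0" "g k \<noteq> q" using gr k by auto
      have "lex_less (g k, j) (\<tau> (g k, j))"
      proof -
        have "k < h a \<or> (k = h a \<and> j < b)" using ll t1 pkj by (simp add: lex_less_def)
        then have "h (g k) < h a \<or> (h (g k) = h a \<and> j < b)" using hg by simp
        then have "g k < a \<or> (g k = a \<and> j < b)"
          using hmono[OF gk ne(1) ne(2)] gh[OF ne(1) ne(2)] by (metis hg)
        then show ?thesis using ab by (simp add: lex_less_def)
      qed
      then have "piece D (g k, j) = nu (piece D (\<tau> (g k, j)))" using T3 K by blast
      moreover have "piece (del2 q D) p = piece D (g k, j)" using pkj nthD k by (simp add: piece_def)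
      moreover have "piece (del2 q D) (\<tau>' p) = piece D (\<tau> (g k, j))"
        using t1 ab nthD[OF \<open>h a < n - 2\<close>] gh[OF ne(1) ne(2)] by (simp add: piece_def)
      ultimately show "piece (del2 q D) p = nu (piece (del2 q D) (\<tau>' p))" by simp
    qed
  qed
  then show ?thesis by blast
qed




lemma ends_block: "x \<in> snd ` set_mset m \<longleftrightarrow> block m x \<noteq> {#}"
proof -
  have "block m x \<noteq> {#} \<longleftrightarrow> (\<exists>s. s \<in># m \<and> snd s = x)" by (simp add: block_def)
  also have "\<dots> \<longleftrightarrow> x \<in> snd ` set_mset m" by force
  finally show ?thesis by simp
qed

lemma block_diff: "block (m - N) x = block m x - block N x"
  by (simp add: block_def)

lemma canonical_via: "sorted_wrt (>) L \<Longrightarrow> set L = snd ` set_mset m \<Longrightarrow> canonical_order m = canon_aux m {#} L"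
  by (simp add: canonical_order_def ends_desc_char)

lemma canonical_empty: "canonical_order {#} = []"
  using canonical_via[of "[]" "{#}"] by simp

lemma ends_helper: "\<forall>x\<in>E. x \<le> (c::int) \<Longrightarrow> x \<noteq> c \<Longrightarrow> x \<noteq> c - 1 \<Longrightarrow> x \<in> E \<longleftrightarrow> x \<in> {x\<in>E. x < c - 1}"
  by auto

context cset begin

lemma M1: "k2 = 1 \<Longrightarrow> M = [xs!k1]"
proof -
  assume k: "k2 = 1"
  then obtain a where "M = [a]" using lenM by (cases M) auto
  then show ?thesis using xsM[of k1] k by simp
qed

lemma canon_del:
  assumes Tdef: "T = canon_aux m (R2 m c) cs2" and cs2s: "sorted_wrt (>) cs2"
    and cs2set: "set cs2 = {x \<in> snd ` set_mset m. x < c - 1}"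
    and cmax: "\<forall>x\<in>snd ` set_mset m. x \<le> c"
    and q: "0 < q" "xs!q = nu_inv (xs!0)" "k1 \<le> q" "q < k1 + k2"
    and q2: "k1 = 2 \<longrightarrow> k2 = 2 \<and> xs!(5-q) = nu_inv (xs!1)"
  shows "canonical_order (m - {#xs!0, xs!q#}) = del2 q xs"
proof -
  define m' where "m' = m - {#xs!0, xs!q#}"
  have s0: "snd (xs!0) = c" using ends_A k1_pos by simp
  have sq: "snd (xs!q) = c - 1" using ends_M[OF q(3) q(4)] .
  have bN: "block {#xs!0, xs!q#} x = (if x = c then {#xs!0#} else {#}) + (if x = c - 1 then {#xs!q#} else {#})" for x
    using s0 sq by (auto simp: block_def)
  have bo: "block m' x = block m x" if "x \<noteq> c" "x \<noteq> c - 1" for x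
    using that bN by (simp add: m'_def block_diff)
  have cong: "canon_aux m' r cs2 = canon_aux m r cs2" for r
    by (rule canon_aux_cong) (use cs2set bo in auto)
  have bmc: "block m' c = block m c - {#xs!0#}" using bN by (simp add: m'_def block_diff)
  have bmc1: "block m' (c - 1) = block m (c - 1) - {#xs!q#}" using bN by (simp add: m'_def block_diff)
  have endso: "x \<in> snd ` set_mset m' \<longleftrightarrow> x \<in> snd ` set_mset m" if "x \<noteq> c" "x \<noteq> c - 1" for x
    using ends_block bo[OF that] by simp
  have bA: "block m c = mset A" using mset_A by simp
  have bM: "block m (c - 1) = mset M" using mset_M by simp
  show ?thesis
  proof (cases "k1 = 1")
    case k: True
    show ?thesis
    proof (cases "k2 = 1")
      case k2: True
      have q1: "q = 1" using q k k2 by simp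
      have A: "A = [xs!0]" using A1 k by simp
      have M: "M = [xs!1]" using M1 k2 k by simp
      have xs: "xs = [xs!0, xs!1] @ T" using xsAMT A M by simp
      have e1: "xs!1 = nu_inv (xs!0)" using q q1 by simp
      have b1: "block m c = {#xs!0#}" using bA A by simp
      have b2: "block m (c - 1) = {#xs!1#}" using bM M by simp
      have "image_mset nu_inv (block m c) = {#xs!1#}" using b1 e1 by simp
      then have "P2 m c = {#xs!1#}" using b2 by (simp add: P2_def)
      then have R: "R2 m c = {#}" using b2 by (simp add: R2_def)
      have ends': "set cs2 = snd ` set_mset m'"
      proof -
        have "x \<in> snd ` set_mset m' \<longleftrightarrow> x \<in> set cs2" for x
        proof (cases "x = c \<or> x = c - 1")
          case True
          have "block m' c = {#}" using bmc b1 by simp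
          moreover have "block m' (c - 1) = {#}" using bmc1 b2 q1 by simp
          ultimately have "block m' x = {#}" using True by blast
          then have "x \<notin> snd ` set_mset m'" using ends_block by blast
          moreover have "x \<notin> set cs2" using True cs2set by auto
          ultimately show ?thesis by blast
        next
          case False
          then have xc: "x \<noteq> c" "x \<noteq> c - 1" by auto
          have e1: "x \<in> snd ` set_mset m' \<longleftrightarrow> x \<in> snd ` set_mset m" using endso xc by blast
          have e2: "x \<in> snd ` set_mset m \<longleftrightarrow> x \<in> set cs2"
            using ends_helper[OF cmax xc] cs2set by blast
          show ?thesis using e1 e2 xc by simp
        qed
        then show ?thesis by blast
      qed
      have "canonical_order m' = canon_aux m' {#} cs2" using canonical_via[OF cs2s ends'] .
      also have "\<dots> = T" using cong Tdef R by simp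
      also have "T = del2 q xs"
      proof -
        have "drop 2 xs = drop 2 ([xs!0, xs!1] @ T)" using xs by (rule arg_cong)
        moreover have "tl (take 1 xs) = []" by (cases xs) simp_all
        ultimately show ?thesis using q1 by (simp add: del2_def numeral_2_eq_2)
      qed
      finally show ?thesis by (simp add: m'_def)
    next
      case k2: False
      then have k22: "k2 = 2" using q(3,4) k k2_le by linarith
      have qq: "q = 1 \<or> q = 2" using q(3,4) k k22 by linarith
      define ot where "ot = 3 - q"
      have A: "A = [xs!0]" using A1 k by simp
      have M: "M = [xs!1, xs!2]" using M2 k22 k by (simp add: numeral_eq_Suc)
      have xs: "xs = [xs!0, xs!1, xs!2] @ T" using xsAMT A M by simp
      have so: "snd (xs!ot) = c - 1" using ends_M qq k k22 by (auto simp: ot_def)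
      have b1: "block m c = {#xs!0#}" using bA A by simp
      have b2: "block m (c - 1) = {#xs!q, xs!ot#}" using bM M qq by (auto simp: ot_def)
      have P: "P2 m c = {#xs!q#}" using b1 b2 q(2) by (simp add: P2_def)
      have R: "R2 m c = {#xs!ot#}" using b2 P by (simp add: R2_def)
      have bm1: "block m' c = {#}" using bmc b1 by simp
      have bm2: "block m' (c - 1) = {#xs!ot#}" using bmc1 b2 by simp
      have ends': "set ((c - 1) # cs2) = snd ` set_mset m'"
      proof -
        have "x \<in> snd ` set_mset m' \<longleftrightarrow> x \<in> set ((c - 1) # cs2)" for x
        proof (cases "x = c \<or> x = c - 1")
          case True
          then show ?thesis using ends_block[of x m'] bm1 bm2 cs2set by auto
        next
          case False
          then have xc: "x \<noteq> c" "x \<noteq> c - 1" by auto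
          have e1: "x \<in> snd ` set_mset m' \<longleftrightarrow> x \<in> snd ` set_mset m" using endso xc by blast
          have e2: "x \<in> snd ` set_mset m \<longleftrightarrow> x \<in> set cs2"
            using ends_helper[OF cmax xc] cs2set by blast
          show ?thesis using e1 e2 xc by simp
        qed
        then show ?thesis by blast
      qed
      have srt: "sorted_wrt (>) ((c - 1) # cs2)" using cs2s cs2set by auto
      have "canonical_order m' = canon_aux m' {#} ((c - 1) # cs2)" using canonical_via[OF srt ends'] .
      also have "\<dots> = [xs!ot] @ canon_aux m' {#xs!ot#} cs2"
        using bm2 asc_single[OF so] by (simp add: Let_def)
      also have "\<dots> = [xs!ot] @ T" using cong Tdef R by simp
      also have "\<dots> = del2 q xs"
      proof (cases "q = 1")
        case True
        have "del2 q xs = del2 q ([xs!0, xs!1, xs!2] @ T)" using arg_cong[OF xs, of "del2 q"] .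
        then show ?thesis using True by (simp add: del2_def ot_def)
      next
        case False then have "q = 2" using qq by simp
        have "del2 q xs = del2 q ([xs!0, xs!1, xs!2] @ T)" using arg_cong[OF xs, of "del2 q"] .
        then show ?thesis using \<open>q = 2\<close> by (simp add: del2_def ot_def numeral_eq_Suc)
      qed
      finally show ?thesis by (simp add: m'_def)
    qed
  next
    case False
    then have k: "k1 = 2" using k1_pos k1_le by simp
    have k22: "k2 = 2" and eo: "xs!(5-q) = nu_inv (xs!1)" using q2 k by auto
    have qq: "q = 2 \<or> q = 3" using q(3,4) k k22 by linarith
    define ot where "ot = 5 - q"
    have A: "A = [xs!0, xs!1]" using A2 k by simp
    have M: "M = [xs!2, xs!3]" using M2 k22 k by (simp add: numeral_eq_Suc)
    have xs: "xs = [xs!0, xs!1, xs!2, xs!3] @ T" using xsAMT A M by simp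
    have so: "snd (xs!ot) = c - 1" using ends_M qq k k22 by (auto simp: ot_def)
    have s1: "snd (xs!1) = c" using ends_A k by simp
    have b1: "block m c = {#xs!0, xs!1#}" using bA A by simp
    have b2: "block m (c - 1) = {#xs!q, xs!ot#}" using bM M qq by (auto simp: ot_def)
    have "image_mset nu_inv (block m c) = block m (c - 1)" using b1 b2 q(2) eo by (simp add: ot_def)
    then have P: "P2 m c = block m (c - 1)" by (simp add: P2_def)
    have R: "R2 m c = {#}" using P by (simp add: R2_def)
    have bm1: "block m' c = {#xs!1#}" using bmc b1 by simp
    have bm2: "block m' (c - 1) = {#xs!ot#}" using bmc1 b2 by simp
    have ends': "set (c # (c - 1) # cs2) = snd ` set_mset m'"
    proof -
      have "x \<in> snd ` set_mset m' \<longleftrightarrow> x \<in> set (c # (c - 1) # cs2)" for x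
      proof (cases "x = c \<or> x = c - 1")
        case True
        then show ?thesis using ends_block[of x m'] bm1 bm2 by auto
      next
        case False
        then have xc: "x \<noteq> c" "x \<noteq> c - 1" by auto
        have e1: "x \<in> snd ` set_mset m' \<longleftrightarrow> x \<in> snd ` set_mset m" using endso xc by blast
        have e2: "x \<in> snd ` set_mset m \<longleftrightarrow> x \<in> set cs2"
          using ends_helper[OF cmax xc] cs2set by blast
        show ?thesis using e1 e2 xc by simp
      qed
      then show ?thesis by blast
    qed
    have srt: "sorted_wrt (>) (c # (c - 1) # cs2)" using cs2s cs2set by auto
    have eo': "xs!ot = nu_inv (xs!1)" using eo by (simp add: ot_def)
    have "canonical_order m' = canon_aux m' {#} (c # (c - 1) # cs2)" using canonical_via[OF srt ends'] .
    also have "\<dots> = [xs!1] @ [xs!ot] @ canon_aux m' {#} cs2"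
      using bm1 bm2 asc_single[OF so] asc_single[OF s1] eo' by (simp add: Let_def)
    also have "\<dots> = [xs!1, xs!ot] @ T" using cong Tdef R by simp
    also have "\<dots> = del2 q xs"
    proof (cases "q = 2")
      case True
      have "del2 q xs = del2 q ([xs!0, xs!1, xs!2, xs!3] @ T)" using arg_cong[OF xs, of "del2 q"] .
      then show ?thesis using True by (simp add: del2_def ot_def numeral_eq_Suc)
    next
      case False then have "q = 3" using qq by simp
      have "del2 q xs = del2 q ([xs!0, xs!1, xs!2, xs!3] @ T)" using arg_cong[OF xs, of "del2 q"] .
      then show ?thesis using \<open>q = 3\<close> by (simp add: del2_def ot_def numeral_eq_Suc)
    qed
    finally show ?thesis by (simp add: m'_def)
  qed
qed

end



lemma filter_union_disj:
  "(\<forall>x. \<not> (P x \<and> Q x)) \<Longrightarrow> filter_mset P m + filter_mset Q m = filter_mset (\<lambda>x. P x \<or> Q x) m"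
proof (rule multiset_eqI)
  fix x assume a: "\<forall>x. \<not> (P x \<and> Q x)"
  show "count (filter_mset P m + filter_mset Q m) x = count (filter_mset (\<lambda>x. P x \<or> Q x) m) x"
    using a by (cases "P x"; cases "Q x") simp_all
qed

lemma mset_canon_aux: "distinct cs \<Longrightarrow> mset (canon_aux m prev cs) = filter_mset (\<lambda>s. snd s \<in> set cs) m"
proof (induction cs arbitrary: prev)
  case Nil then show ?case by simp
next
  case (Cons c cs)
  define p where "p = block m c \<inter># image_mset nu_inv prev"
  define r where "r = block m c - p"
  have ps: "p \<subseteq># block m c" by (simp add: p_def)
  have rs: "r \<subseteq># block m c" by (simp add: r_def)
  have pc: "\<forall>s\<in>#p. snd s = c" using ps block_snd by (metis mset_subset_eqD)
  have rc: "\<forall>s\<in>#r. snd s = c" using rs block_snd by (metis mset_subset_eqD)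
  have eq: "canon_aux m prev (c # cs) = asc_list c r @ rev (asc_list c p) @ canon_aux m r cs"
    by (simp add: Let_def p_def r_def)
  have "mset (canon_aux m prev (c # cs)) = r + p + filter_mset (\<lambda>s. snd s \<in> set cs) m"
    using eq asc_mset[OF rc] asc_mset[OF pc] Cons by simp
  also have "r + p = block m c" using ps by (simp add: r_def)
  also have "block m c + filter_mset (\<lambda>s. snd s \<in> set cs) m = filter_mset (\<lambda>s. snd s \<in> set (c # cs)) m"
  proof -
    have "c \<notin> set cs" using Cons.prems by simp
    then have d: "\<forall>x. \<not> (snd x = c \<and> snd x \<in> set cs)" by auto
    show ?thesis using filter_union_disj[OF d] by (simp add: block_def)
  qed
  finally show ?case .
qed

lemma mset_canon: "mset (canonical_order m) = m"
proof -
  have d: "distinct (ends_desc m)"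
    using ends_desc_props[of m] by (simp add: ends_desc_def)
  have "mset (canonical_order m) = filter_mset (\<lambda>s. snd s \<in> set (ends_desc m)) m"
    unfolding canonical_order_def using mset_canon_aux[OF d] .
  also have "\<dots> = m" using ends_desc_props[of m] by (simp add: filter_mset_eq_conv)
  finally show ?thesis .
qed

lemma sorted_const_snd: "(\<forall>x\<in>set l. snd x = (c::int)) \<Longrightarrow> sorted_wrt (\<lambda>s t. snd t \<le> snd s) l"
  by (induction l) auto

lemma sorted_canon_aux: "sorted_wrt (>) cs \<Longrightarrow> sorted_wrt (\<lambda>s t. snd t \<le> snd s) (canon_aux m prev cs)"
proof (induction cs arbitrary: prev)
  case Nil then show ?case by simp
next
  case (Cons c cs)
  define p where "p = block m c \<inter># image_mset nu_inv prev"
  define r where "r = block m c - p"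
  have eq: "canon_aux m prev (c # cs) = (asc_list c r @ rev (asc_list c p)) @ canon_aux m r cs"
    by (simp add: Let_def p_def r_def)
  have h: "\<forall>x\<in>set (asc_list c r @ rev (asc_list c p)). snd x = c" using asc_snd by auto
  have t: "\<forall>y\<in>set (canon_aux m r cs). snd y < c"
    using canon_aux_snd Cons.prems by fastforce
  have "sorted_wrt (\<lambda>s t. snd t \<le> snd s) (canon_aux m r cs)" using Cons by simp
  moreover have "\<forall>x\<in>set (asc_list c r @ rev (asc_list c p)). \<forall>y\<in>set (canon_aux m r cs). snd y \<le> snd x"
    using h t by fastforce
  ultimately show ?case unfolding eq
    using sorted_wrt_append[where xs = "asc_list c r @ rev (asc_list c p)"] sorted_const_snd[OF h] by blast
qed

lemma standard_canon: "standard_ordering (canonical_order m)"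
proof -
  have s: "sorted_wrt (\<lambda>s t. snd t \<le> snd s) (canonical_order m)"
    unfolding canonical_order_def using sorted_canon_aux ends_desc_props by blast
  show ?thesis unfolding standard_ordering_def
  proof (intro allI impI)
    fix i j assume "i < j \<and> j < length (canonical_order m)"
    then have "snd (canonical_order m ! j) \<le> snd (canonical_order m ! i)"
      using s by (simp add: sorted_wrt_iff_nth_less)
    then show "\<not> seg_prec (canonical_order m ! i) (canonical_order m ! j)"
      by (simp add: seg_prec_def)
  qed
qed

lemma pair_sub: "a \<in># m \<Longrightarrow> b \<in># m \<Longrightarrow> a \<noteq> b \<Longrightarrow> {#a, b#} \<subseteq># m"
proof -
  assume a: "a \<in># m" "b \<in># m" "a \<noteq> b"
  have "b \<in># m - {#a#}" using a by (simp add: in_diff_count)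
  then show ?thesis using a by (simp add: insert_subset_eq_iff)
qed

lemma main_ind:
  "in_OZ m \<Longrightarrow> (\<forall>c. size (block m c) \<le> 2) \<Longrightarrow> is_decomp (canonical_order m) D \<Longrightarrow> relevant D
    \<Longrightarrow> trivial_decomp D \<and> speh_type m"
proof (induction "size m" arbitrary: m D rule: less_induct)
  case less
  show ?case
  proof (cases "m = {#}")
    case True
    then have "D = []" using less.prems(3) canonical_empty by (simp add: is_decomp_def)
    moreover have "speh_type m" using True unfolding speh_type_def in_OZ_def
      by (intro exI[of _ "{#}"]) simp
    ultimately show ?thesis by (simp add: trivial_decomp_def)
  next
    case ne: False
    obtain c cs2 where cs: "c \<in> snd ` set_mset m" "\<forall>x\<in>snd ` set_mset m. x \<le> c"
      "sorted_wrt (>) cs2" "set cs2 = {x \<in> snd ` set_mset m. x < c - 1}"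
      "canonical_order m = asc_list c (block m c) @ asc_list (c - 1) (R2 m c)
        @ rev (asc_list (c - 1) (P2 m c)) @ canon_aux m (R2 m c) cs2"
      using canon_struct[OF ne] by blast
    define xs where "xs = canonical_order m"
    define T where "T = canon_aux m (R2 m c) cs2"
    obtain \<tau> where tau: "(\<forall>p\<in>decomp_index D. \<tau> p \<in> decomp_index D \<and> \<tau> (\<tau> p) = p \<and> \<tau> p \<noteq> p) \<and>
     (\<forall>i j. (i, Suc j) \<in> decomp_index D \<longrightarrow> fst (\<tau> (i, Suc j)) < fst (\<tau> (i, j))) \<and>
     (\<forall>p\<in>decomp_index D. lex_less p (\<tau> p) \<longrightarrow> piece D p = nu (piece D (\<tau> p)))"
      using less.prems(4) unfolding relevant_def by blast
    have R: "reldec xs D \<tau>" unfolding reldec_def using tau less.prems(3) xs_def by blast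
    have Te: "\<forall>s\<in>set T. snd s < c - 1" using canon_aux_snd cs(4) T_def by fastforce
    have cin: "block m c \<noteq> {#}" using cs(1) ends_block by blast
    interpret C: cset xs D \<tau> m c T
      by (rule cset.intro[OF R]) (use less.prems(2) cs(5) Te cin in \<open>auto simp: cset_axioms_def xs_def T_def\<close>)
    have "\<exists>q. 0 < q \<and> q < length xs \<and> length (D!0) = 1 \<and> length (D!q) = 1 \<and> \<tau> (0,0) = (q,0)
         \<and> xs!q = nu_inv (xs!0) \<and> C.k1 \<le> q \<and> q < C.k1 + C.k2 \<and>
         (C.k1 = 2 \<longrightarrow> C.k2 = 2 \<and> xs!(5-q) = nu_inv (xs!1))"
    proof (cases "C.k1 = 1")
      case True then show ?thesis using C.local_k1 by auto
    next
      case False then have "C.k1 = 2" using C.k1_pos C.k1_le by simp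
      then show ?thesis using C.local_k2 by auto
    qed
    then obtain q where q: "0 < q" "q < length xs" "length (D!0) = 1" "length (D!q) = 1"
      "\<tau> (0,0) = (q,0)" "xs!q = nu_inv (xs!0)" "C.k1 \<le> q" "q < C.k1 + C.k2"
      "C.k1 = 2 \<longrightarrow> C.k2 = 2 \<and> xs!(5-q) = nu_inv (xs!1)" by blast
    define m' where "m' = m - {#xs!0, xs!q#}"
    have can': "canonical_order m' = del2 q xs"
      using C.canon_del[OF T_def cs(3) cs(4) cs(2) q(1) q(6) q(7) q(8) q(9)] by (simp add: m'_def)
    obtain \<tau>' where R': "reldec (del2 q xs) (del2 q D) \<tau>'"
      using del2_rel[OF R q(1) q(2) q(3) q(4) q(5)] by blast
    have dec': "is_decomp (canonical_order m') (del2 q D)" using R' can' by (simp add: reldec_def)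
    have rel': "relevant (del2 q D)" using R' unfolding relevant_def reldec_def by blast
    have mx: "mset xs = m" using mset_canon xs_def by simp
    have in0: "xs!0 \<in># m" using mx q(1,2) by (metis nth_mem_mset order.strict_trans)
    have inq: "xs!q \<in># m" using mx q(2) by (metis nth_mem_mset)
    have neq: "xs!0 \<noteq> xs!q"
    proof
      assume "xs!0 = xs!q"
      then have "snd (xs!0) = snd (xs!0) - 1" using q(6) by (metis nu_inv_snd)
      then show False by simp
    qed
    have sub: "{#xs!0, xs!q#} \<subseteq># m" using pair_sub[OF in0 inq neq] .
    have sz: "size m' < size m"
    proof -
      have "size m' = size m - 2" using size_Diff_submset[OF sub] by (simp add: m'_def)
      moreover have "2 \<le> size m" using size_mset_mono[OF sub] by simp
      ultimately show ?thesis by simp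
    qed
    have oz': "in_OZ m'" using less.prems(1) unfolding in_OZ_def m'_def by (meson in_diffD)
    have bl': "\<forall>c. size (block m' c) \<le> 2"
    proof
      fix x
      have "block m' x \<subseteq># block m x" by (simp add: m'_def block_def multiset_filter_mono)
      then show "size (block m' x) \<le> 2" using size_mset_mono less.prems(2) by (meson order_trans)
    qed
    have IH: "trivial_decomp (del2 q D) \<and> speh_type m'"
      using less.hyps[OF sz oz' bl' dec' rel'] .
    have lD: "length D = length xs" using R by (simp add: reldec_def is_decomp_def)
    have triv: "trivial_decomp D"
      unfolding trivial_decomp_def
    proof (intro allI impI)
      fix i assume i: "i < length D"
      show "length (D!i) = 1"
      proof (cases "i = 0 \<or> i = q")
        case True then show ?thesis using q by auto
      next
        case False
        define k where "k = (if i < q then i - 1 else i - 2)"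
        have k: "k < length D - 2" using False i q(1) q(2) lD by (auto simp: k_def)
        have "del2 q D ! k = D ! (if k < q - 1 then Suc k else k + 2)"
          using del2_nth[OF q(1) _ k] q(2) lD by simp
        also have "(if k < q - 1 then Suc k else k + 2) = i" using False q(1) by (auto simp: k_def)
        finally have "del2 q D ! k = D ! i" .
        moreover have "k < length (del2 q D)" using k del2_len[OF q(1), of D] q(2) lD by simp
        moreover have "length (del2 q D ! k) = 1" using IH \<open>k < length (del2 q D)\<close>
          unfolding trivial_decomp_def by blast
        ultimately show ?thesis by simp
      qed
    qed
    obtain n' where n': "in_OZ n'" "m' = n' + image_mset nu n'"
      using IH unfolding speh_type_def by blast
    have "m = m' + {#xs!0, xs!q#}" unfolding m'_def by (rule sym, rule subset_mset.diff_add[OF sub])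
    also have "\<dots> = add_mset (xs!q) n' + image_mset nu (add_mset (xs!q) n')"
      using n'(2) q(6) by simp
    finally have meq: "m = add_mset (xs!q) n' + image_mset nu (add_mset (xs!q) n')" .
    have "in_OZ (add_mset (xs!q) n')"
      using n'(1) less.prems(1) inq unfolding in_OZ_def by auto
    then have "speh_type m" unfolding speh_type_def using meq by blast
    then show ?thesis using triv by simp
  qed
qed

theorem mainTheorem11:
  fixes m :: "seg multiset"
  assumes "in_OZ m"
    and "\<forall>c. size (block m c) \<le> 2"
  shows "(\<forall>D. is_decomp (canonical_order m) D \<and> relevant D \<longrightarrow> trivial_decomp D)
         \<and> (distinguished m \<longrightarrow> speh_type m)"
proof
  show "\<forall>D. is_decomp (canonical_order m) D \<and> relevant D \<longrightarrow> trivial_decomp D"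
    using main_ind[OF assms] by blast
  show "distinguished m \<longrightarrow> speh_type m"
  proof
    assume "distinguished m"
    then obtain D where "is_decomp (canonical_order m) D" "relevant D"
      unfolding distinguished_def using mset_canon standard_canon by blast
    then show "speh_type m" using main_ind[OF assms] by blast
  qed
qed



end
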